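(* For every integer $T=6k$ with $k\ge 1$ and every $\sigma\in\mathfrak S_3$, the vector $\sigma c$ with $c=[10k-1,\,4k,\,-8k+2,\,-2k+1,\,-2k+1,\,4k]$ defines a facet of $P^T$.
   Context: For an integer $T\ge 2$, let $\Omega_T$ be the set of words $w=s_1s_2\cdots s_T$ over $\{1,2,3\}$ with $s_l\neq s_{l+1}$ for $l=1,\dots,T-1$. For $w\in\Omega_T$ and an ordered pair $ij$, $i\neq j$, let $x_{ij}(w)$ be the number of indices $1\le l\le T-1$ with $s_ls_{l+1}=ij$. Vectors of $\mathbb R^6$ are indexed in the order $[x_{12},x_{13},x_{21},x_{23},x_{31},x_{32}]$. Let $a_w=[x_{12}(w),\dots,x_{32}(w)]$ and $P^T=\mathrm{conv}\{a_w:w\in\Omega_T\}$. $\mathfrak S_3$ acts on $\mathbb R^6$ by $(\sigma c)_{ij}=c_{\sigma(i)\sigma(j)}$. A vector $c$ defines a facet of $P^T$ if $c\cdot a_w\ge0$ for all $w\in\Omega_T$ and $\{x\in P^T: c\cdot x=0\}$ is a facet of $P^T$. *)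

theory Defs
  imports "HOL-Analysis.Analysis"
begin

definition Omega :: "nat \<Rightarrow> nat list set" where
  "Omega T = {w. length w = T \<and> set w \<subseteq> {1,2,3} \<and>
                 (\<forall>l. Suc l < T \<longrightarrow> w ! l \<noteq> w ! Suc l)}"

definition xcount :: "nat \<Rightarrow> nat \<Rightarrow> nat list \<Rightarrow> nat" where
  "xcount i j w = card {l. Suc l < length w \<and> w ! l = i \<and> w ! Suc l = j}"

definition pairs :: "(nat \<times> nat) list" where
  "pairs = [(1,2),(1,3),(2,1),(2,3),(3,1),(3,2)]"

definition vec_of :: "(nat \<Rightarrow> nat \<Rightarrow> real) \<Rightarrow> real ^ 6" where
  "vec_of f = vector (map (\<lambda>(i,j). f i j) pairs)"

definition avec :: "nat list \<Rightarrow> real ^ 6" where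
  "avec w = vec_of (\<lambda>i j. real (xcount i j w))"

definition PT :: "nat \<Rightarrow> (real ^ 6) set" where
  "PT T = convex hull (avec ` Omega T)"

definition cfun :: "nat \<Rightarrow> nat \<Rightarrow> nat \<Rightarrow> real" where
  "cfun k i j = (if (i,j) = (1,2) then 10 * real k - 1
     else if (i,j) = (1,3) then 4 * real k
     else if (i,j) = (2,1) then - 8 * real k + 2
     else if (i,j) = (2,3) then - 2 * real k + 1
     else if (i,j) = (3,1) then - 2 * real k + 1
     else if (i,j) = (3,2) then 4 * real k
     else 0)"

definition sigma_act :: "(nat \<Rightarrow> nat) \<Rightarrow> (nat \<Rightarrow> nat \<Rightarrow> real) \<Rightarrow> real ^ 6" where
  "sigma_act \<sigma> f = vec_of (\<lambda>i j. f (\<sigma> i) (\<sigma> j))"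

definition defines_facet :: "real ^ 6 \<Rightarrow> nat \<Rightarrow> bool" where
  "defines_facet c T \<longleftrightarrow> (\<forall>w \<in> Omega T. c \<bullet> avec w \<ge> 0) \<and>
      {x \<in> PT T. c \<bullet> x = 0} facet_of PT T"

end

theory Submission
  imports Defs
begin


lemma exhaust_6:
  fixes x :: 6
  shows "x = 1 \<or> x = 2 \<or> x = 3 \<or> x = 4 \<or> x = 5 \<or> x = 6"
proof (induct x)
  case (of_int z)
  then have "z = 0 \<or> z = 1 \<or> z = 2 \<or> z = 3 \<or> z = 4 \<or> z = 5" by fastforce
  then show ?case by auto
qed

lemma UNIV_6: "(UNIV :: 6 set) = {1,2,3,4,5,6}"
  using exhaust_6 by auto

lemma t1: "(1::6) \<noteq> 2 \<and> (2::6) \<noteq> 6 \<and> (6::6) \<noteq> 1" by simp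
lemma sum_6: "sum f (UNIV::6 set) = f 1 + f 2 + f 3 + f 4 + f 5 + f 6"
  unfolding UNIV_6 by (simp add: add.assoc)

lemma vec6_eq_iff: "(x::'a^6) = y \<longleftrightarrow> x$1 = y$1 \<and> x$2 = y$2 \<and> x$3 = y$3 \<and> x$4 = y$4 \<and> x$5 = y$5 \<and> x$6 = y$6"
  apply (rule iffI)
   apply simp
  apply (clarsimp simp: vec_eq_iff)
  subgoal for i using exhaust_6[of i] by auto
  done

lemma inner6: "(x::real^6) \<bullet> y = x$1*y$1 + x$2*y$2 + x$3*y$3 + x$4*y$4 + x$5*y$5 + x$6*y$6"
  by (simp add: inner_vec_def sum_6)

lemma vector_6 [simp]:
 "(vector [a,b,c,d,e,f] ::('a::zero)^6)$1 = a"
 "(vector [a,b,c,d,e,f] ::('a::zero)^6)$2 = b"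
 "(vector [a,b,c,d,e,f] ::('a::zero)^6)$3 = c"
 "(vector [a,b,c,d,e,f] ::('a::zero)^6)$4 = d"
 "(vector [a,b,c,d,e,f] ::('a::zero)^6)$5 = e"
 "(vector [a,b,c,d,e,f] ::('a::zero)^6)$6 = f"
  unfolding vector_def by simp_all

lemma vec_of_nth [simp]:
  "vec_of f $ 1 = f 1 2" "vec_of f $ 2 = f 1 3" "vec_of f $ 3 = f 2 1"
  "vec_of f $ 4 = f 2 3" "vec_of f $ 5 = f 3 1" "vec_of f $ 6 = f 3 2"
  by (simp_all add: vec_of_def pairs_def)

lemma inner_vec_of: "vec_of f \<bullet> vec_of g = f 1 2 * g 1 2 + f 1 3 * g 1 3 + f 2 1 * g 2 1 + f 2 3 * g 2 3 + f 3 1 * g 3 1 + f 3 2 * g 3 2"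
  by (simp add: inner6)

lemma xcount_Nil [simp]: "xcount i j [] = 0"
  by (simp add: xcount_def)

lemma xcount_Cons: "xcount i j (a # v) = (if v \<noteq> [] \<and> a = i \<and> hd v = j then 1 else 0) + xcount i j v"
proof -
  let ?A = "{l. Suc l < length v \<and> v!l = i \<and> v!Suc l = j}"
  have fin: "finite ?A" by (rule finite_subset[of _ "{..<length v}"]) auto
  have eq: "{l. Suc l < length (a#v) \<and> (a#v)!l = i \<and> (a#v)!Suc l = j}
     = (if v \<noteq> [] \<and> a = i \<and> hd v = j then {0} else {}) \<union> Suc ` ?A"
  proof (rule set_eqI)
    fix x show "x \<in> {l. Suc l < length (a#v) \<and> (a#v)!l = i \<and> (a#v)!Suc l = j} \<longleftrightarrow>
       x \<in> (if v \<noteq> [] \<and> a = i \<and> hd v = j then {0} else {}) \<union> Suc ` ?A"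
      by (cases x) (auto simp: hd_conv_nth)
  qed
  have "0 \<notin> Suc ` ?A" by auto
  then show ?thesis unfolding xcount_def eq using fin by (simp add: card_image)
qed

lemma xcount_single [simp]: "xcount i j [a] = 0"
  by (simp add: xcount_Cons)

lemma xcount_Cons2 [simp]: "xcount i j (a # b # v) = (if a = i \<and> b = j then 1 else 0) + xcount i j (b # v)"
  by (simp add: xcount_Cons[of i j a])

lemma xcount_append: "xcount i j (u @ v) = xcount i j u + xcount i j v + (if u \<noteq> [] \<and> v \<noteq> [] \<and> last u = i \<and> hd v = j then 1 else 0)"
proof (induction u)
  case Nil then show ?case by simp
next
  case (Cons a u)
  show ?case
  proof (cases u)
    case Nil then show ?thesis by (simp add: xcount_Cons)
  next
    case (Cons b u') then show ?thesis using Cons.IH by (simp add: xcount_Cons)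
  qed
qed

lemma xcount_map: "inj f \<Longrightarrow> xcount (f a) (f b) (map f v) = xcount a b v"
proof (induction v)
  case Nil then show ?case by simp
next
  case (Cons x v) then show ?case by (cases v) (auto simp: xcount_Cons inj_eq)
qed

lemma Omega_alt: "Omega T = {w. length w = T \<and> set w \<subseteq> {1,2,3} \<and> successively (\<noteq>) w}"
  by (auto simp: Omega_def successively_conv_nth)

definition ind :: "bool \<Rightarrow> int" where "ind b = (if b then 1 else 0)"

lemma flow:
  assumes "set w \<subseteq> {1,2,3}" "successively (\<noteq>) w" "w \<noteq> []"
  shows "int (xcount 1 2 w) + xcount 1 3 w + ind (last w = 1) = int (xcount 2 1 w) + xcount 3 1 w + ind (hd w = 1)
       \<and> int (xcount 2 1 w) + xcount 2 3 w + ind (last w = 2) = int (xcount 1 2 w) + xcount 3 2 w + ind (hd w = 2)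
       \<and> int (xcount 3 1 w) + xcount 3 2 w + ind (last w = 3) = int (xcount 1 3 w) + xcount 2 3 w + ind (hd w = 3)
       \<and> int (xcount 1 2 w) + xcount 1 3 w + xcount 2 1 w + xcount 2 3 w + xcount 3 1 w + xcount 3 2 w = int (length w) - 1"
  using assms
proof (induction w)
  case Nil then show ?case by simp
next
  case (Cons x v)
  show ?case
  proof (cases v)
    case Nil then show ?thesis by (simp add: ind_def)
  next
    case (Cons y v')
    have xy: "x \<in> {1,2,3}" "y \<in> {1,2,3}" "x \<noteq> y" using Cons.prems Cons by auto
    have ih: "int (xcount 1 2 v) + xcount 1 3 v + ind (last v = 1) = int (xcount 2 1 v) + xcount 3 1 v + ind (hd v = 1)
       \<and> int (xcount 2 1 v) + xcount 2 3 v + ind (last v = 2) = int (xcount 1 2 v) + xcount 3 2 v + ind (hd v = 2)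
       \<and> int (xcount 3 1 v) + xcount 3 2 v + ind (last v = 3) = int (xcount 1 3 v) + xcount 2 3 v + ind (hd v = 3)
       \<and> int (xcount 1 2 v) + xcount 1 3 v + xcount 2 1 v + xcount 2 3 v + xcount 3 1 v + xcount 3 2 v = int (length v) - 1"
      using Cons.IH Cons.prems Cons by auto
    show ?thesis using ih xy unfolding Cons by (auto simp: ind_def)
  qed
qed

lemma arith_main:
  fixes a b c d e f k s1 s2 s3 t1 t2 t3 :: int
  assumes k: "k \<ge> 1" and nn: "a \<ge> 0" "b \<ge> 0" "c \<ge> 0" "d \<ge> 0" "e \<ge> 0" "f \<ge> 0"
    and s: "(s1,s2,s3) \<in> {(1,0,0),(0,1,0),(0,0,1)}" and t: "(t1,t2,t3) \<in> {(1,0,0),(0,1,0),(0,0,1)}"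
    and f1: "a + b + t1 = c + e + s1" and f2: "c + d + t2 = a + f + s2" and f3: "e + f + t3 = b + d + s3"
    and tot: "a + b + c + d + e + f = 6*k - 1"
  shows "(10*k-1)*a + 4*k*b + (-8*k+2)*c + (-2*k+1)*d + (-2*k+1)*e + 4*k*f \<ge> 0"
proof -
  define U where "U = 10*a+4*b-8*c-2*d-2*e+4*f"
  define V where "V = -a+2*c+d+e"
  have eq: "(10*k-1)*a + 4*k*b + (-8*k+2)*c + (-2*k+1)*d + (-2*k+1)*e + 4*k*f = k*U + V"
    unfolding U_def V_def by (simp add: algebra_simps)
  have st: "s1 + s2 + s3 = 1" "t1 + t2 + t3 = 1" "s1 \<ge> 0" "s2 \<ge> 0" "s3 \<ge> 0" "t1 \<ge> 0" "t2 \<ge> 0" "t3 \<ge> 0"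
    using s t by auto
  define cw where "cw = a + d + e"
  have Ueq: "U = 8*(t2 - s2) + 4*(t3 - s3) + 2*cw"
    unfolding U_def cw_def using f2 f3 by (simp add: algebra_simps)
  have Veq: "3*V = 3*(s2 - t2) + 12*k - 2 - cw - (s1 - t1) + (s3 - t3)"
    unfolding V_def cw_def using f1 f2 f3 tot by (simp add: algebra_simps)
  have cwb: "0 \<le> cw" "cw \<le> 6*k - 1" unfolding cw_def using nn tot by linarith+
  have V0: "V \<ge> 0"
  proof -
    have "3*V \<ge> 0" using Veq cwb st k by (smt (verit))
    then show ?thesis by linarith
  qed
  have neg: "U < 0 \<Longrightarrow> U = -4 \<and> V = 4*k"
  proof -
    assume U: "U < 0"
    have "cw \<le> 3" using U Ueq st by (smt (verit))
    then have "cw = 0 \<or> cw = 1 \<or> cw = 2 \<or> cw = 3" using cwb by linarith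
    then show ?thesis using s t Ueq Veq U by (elim disjE insertE; simp; presburger)
  qed
  show ?thesis
  proof (cases "U < 0")
    case True then show ?thesis using neg eq by simp
  next
    case False then have "k*U \<ge> 0" using k by simp
    then show ?thesis using eq V0 by simp
  qed
qed

lemma ind_triple: "x \<in> {1,2,3::nat} \<Longrightarrow> (ind (x = 1), ind (x = 2), ind (x = 3)) \<in> {(1,0,0),(0,1,0),(0,0,1)}"
  by (auto simp: ind_def)

lemma cfun_vals [simp]:
  "cfun k 1 2 = 10 * real k - 1" "cfun k 1 3 = 4 * real k" "cfun k 2 1 = - 8 * real k + 2"
  "cfun k 2 3 = - 2 * real k + 1" "cfun k 3 1 = - 2 * real k + 1" "cfun k 3 2 = 4 * real k"
  by (simp_all add: cfun_def)

lemma nonneg_id: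
  assumes k: "k \<ge> 1" and w: "w \<in> Omega (6*k)"
  shows "vec_of (cfun k) \<bullet> avec w \<ge> 0"
proof -
  have len: "length w = 6*k" and set: "set w \<subseteq> {1,2,3}" and suc: "successively (\<noteq>) w"
    using w by (auto simp: Omega_alt)
  have ne: "w \<noteq> []" using len k by auto
  have hd: "hd w \<in> {1,2,3}" using set ne hd_in_set by blast
  have lst: "last w \<in> {1,2,3}" using set ne last_in_set by blast
  note fl = flow[OF set suc ne]
  have I: "(10*int k-1)*int (xcount 1 2 w) + 4*int k*int (xcount 1 3 w) + (-8*int k+2)*int (xcount 2 1 w)
     + (-2*int k+1)*int (xcount 2 3 w) + (-2*int k+1)*int (xcount 3 1 w) + 4*int k*int (xcount 3 2 w) \<ge> 0"
    apply (rule arith_main[OF _ _ _ _ _ _ _ ind_triple[OF hd] ind_triple[OF lst]])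
    using fl len k by auto
  have "real_of_int ((10*int k-1)*int (xcount 1 2 w) + 4*int k*int (xcount 1 3 w) + (-8*int k+2)*int (xcount 2 1 w)
     + (-2*int k+1)*int (xcount 2 3 w) + (-2*int k+1)*int (xcount 3 1 w) + 4*int k*int (xcount 3 2 w)) \<ge> 0"
    using I by linarith
  then show ?thesis unfolding avec_def inner_vec_of by (simp add: mult.assoc cfun_def)
qed

lemma perm6:
  assumes "\<sigma> permutes {1,2,3::nat}"
  shows "(\<sigma> 1, \<sigma> 2, \<sigma> 3) \<in> {(1,2,3),(1,3,2),(2,1,3),(2,3,1),(3,1,2),(3,2,1)}"
proof -
  have im: "\<sigma> x \<in> {1,2,3}" if "x \<in> {1,2,3}" for x using permutes_in_image[OF assms] that by blast
  have inj: "inj \<sigma>" using permutes_inj[OF assms] .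
  have "\<sigma> 1 \<noteq> \<sigma> 2" "\<sigma> 1 \<noteq> \<sigma> 3" "\<sigma> 2 \<noteq> \<sigma> 3" using inj by (auto simp: inj_eq)
  moreover have "\<sigma> 1 \<in> {1,2,3}" "\<sigma> 2 \<in> {1,2,3}" "\<sigma> 3 \<in> {1,2,3}" using im by auto
  ultimately show ?thesis by auto
qed

lemma sum_perm:
  fixes g :: "nat \<Rightarrow> nat \<Rightarrow> real"
  assumes "\<sigma> permutes {1,2,3::nat}"
  shows "g (\<sigma> 1) (\<sigma> 2) + g (\<sigma> 1) (\<sigma> 3) + g (\<sigma> 2) (\<sigma> 1) + g (\<sigma> 2) (\<sigma> 3) + g (\<sigma> 3) (\<sigma> 1) + g (\<sigma> 3) (\<sigma> 2)
       = g 1 2 + g 1 3 + g 2 1 + g 2 3 + g 3 1 + g 3 2"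
  using perm6[OF assms] by (auto simp: ac_simps)

lemma map_perm_Omega:
  assumes "\<sigma> permutes {1,2,3::nat}" "w \<in> Omega T"
  shows "map \<sigma> w \<in> Omega T"
proof -
  have im: "\<sigma> x \<in> {1,2,3}" if "x \<in> {1,2,3}" for x using permutes_in_image[OF assms(1)] that by blast
  have inj: "inj \<sigma>" using permutes_inj[OF assms(1)] .
  show ?thesis using assms(2) im inj by (auto simp: Omega_alt successively_map inj_eq)
qed

lemma sigma_inner:
  assumes "\<sigma> permutes {1,2,3::nat}"
  shows "sigma_act \<sigma> (cfun k) \<bullet> avec w = vec_of (cfun k) \<bullet> avec (map \<sigma> w)"
proof -
  have inj: "inj \<sigma>" using permutes_inj[OF assms] .
  define g where "g i j = cfun k i j * real (xcount i j (map \<sigma> w))" for i j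
  have "sigma_act \<sigma> (cfun k) \<bullet> avec w = g (\<sigma> 1) (\<sigma> 2) + g (\<sigma> 1) (\<sigma> 3) + g (\<sigma> 2) (\<sigma> 1) + g (\<sigma> 2) (\<sigma> 3) + g (\<sigma> 3) (\<sigma> 1) + g (\<sigma> 3) (\<sigma> 2)"
    unfolding sigma_act_def avec_def inner_vec_of g_def by (simp add: xcount_map[OF inj])
  also have "\<dots> = g 1 2 + g 1 3 + g 2 1 + g 2 3 + g 3 1 + g 3 2" by (rule sum_perm[OF assms])
  also have "\<dots> = vec_of (cfun k) \<bullet> avec (map \<sigma> w)"
    unfolding avec_def inner_vec_of g_def by simp
  finally show ?thesis .
qed

definition coord :: "real^6 \<Rightarrow> nat \<Rightarrow> nat \<Rightarrow> real" where
  "coord y i j = (if i = 1 \<and> j = 2 then y$1 else if i = 1 \<and> j = 3 then y$2 else if i = 2 \<and> j = 1 then y$3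
     else if i = 2 \<and> j = 3 then y$4 else if i = 3 \<and> j = 1 then y$5 else if i = 3 \<and> j = 2 then y$6 else 0)"

definition Mp :: "(nat \<Rightarrow> nat) \<Rightarrow> real^6 \<Rightarrow> real^6" where
  "Mp \<sigma> y = vec_of (\<lambda>i j. coord y (\<sigma> i) (\<sigma> j))"

lemma coord_add: "coord (x + y) i j = coord x i j + coord y i j"
  by (simp add: coord_def)

lemma coord_scale: "coord (c *\<^sub>R x) i j = c * coord x i j"
  by (simp add: coord_def)

lemma linear_Mp: "linear (Mp \<sigma>)"
  by (rule linearI) (simp_all add: Mp_def vec6_eq_iff coord_add coord_scale)

lemma inj_Mp:
  assumes "\<sigma> permutes {1,2,3::nat}"
  shows "inj (Mp \<sigma>)"
proof (rule injI)
  fix x y assume "Mp \<sigma> x = Mp \<sigma> y"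
  then have "coord x (\<sigma> 1) (\<sigma> 2) = coord y (\<sigma> 1) (\<sigma> 2) \<and> coord x (\<sigma> 1) (\<sigma> 3) = coord y (\<sigma> 1) (\<sigma> 3)
    \<and> coord x (\<sigma> 2) (\<sigma> 1) = coord y (\<sigma> 2) (\<sigma> 1) \<and> coord x (\<sigma> 2) (\<sigma> 3) = coord y (\<sigma> 2) (\<sigma> 3)
    \<and> coord x (\<sigma> 3) (\<sigma> 1) = coord y (\<sigma> 3) (\<sigma> 1) \<and> coord x (\<sigma> 3) (\<sigma> 2) = coord y (\<sigma> 3) (\<sigma> 2)"
    by (simp add: Mp_def vec6_eq_iff)
  then show "x = y" using perm6[OF assms] by (auto simp: coord_def vec6_eq_iff)
qed

lemma Mp_avec:
  assumes "\<sigma> permutes {1,2,3::nat}"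
  shows "Mp \<sigma> (avec w) = avec (map (inv \<sigma>) w)"
proof -
  have inj: "inj (inv \<sigma>)" using permutes_inj[OF permutes_inv[OF assms]] .
  have x: "xcount i j (map (inv \<sigma>) w) = xcount (\<sigma> i) (\<sigma> j) w" for i j
    using xcount_map[OF inj, of "\<sigma> i" "\<sigma> j" w] permutes_inverses(1)[OF assms]
    by (simp add: permutes_inverses(2)[OF assms])
  show ?thesis unfolding Mp_def avec_def x using perm6[OF assms]
    by (auto simp: vec6_eq_iff coord_def)
qed



lemma xcount_blocks:
  assumes "u \<noteq> []" "last u = r"
  shows "xcount i j (u @ concat (replicate n [p,q,r])) = xcount i j u +
     n * ((if r = i \<and> p = j then 1 else 0) + (if p = i \<and> q = j then 1 else 0) + (if q = i \<and> r = j then 1 else 0))"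
  using assms
proof (induction n arbitrary: u)
  case 0 then show ?case by simp
next
  case (Suc n)
  have e: "u @ concat (replicate (Suc n) [p,q,r]) = (u @ [p,q,r]) @ concat (replicate n [p,q,r])" by simp
  show ?case unfolding e using Suc.IH[of "u @ [p,q,r]"] Suc.prems
    by (simp add: xcount_append)
qed

lemma succ_blocks:
  assumes "successively (\<noteq>) u" "u \<noteq> []" "last u = r" "p \<noteq> q" "q \<noteq> r" "r \<noteq> p"
  shows "successively (\<noteq>) (u @ concat (replicate n [p,q,r]))"
  using assms
proof (induction n arbitrary: u)
  case 0 then show ?case by simp
next
  case (Suc n)
  have e: "u @ concat (replicate (Suc n) [p,q,r]) = (u @ [p,q,r]) @ concat (replicate n [p,q,r])" by simp
  show ?case unfolding e using Suc.IH[of "u @ [p,q,r]"] Suc.prems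
    by (simp add: successively_append_iff)
qed

lemma set_blocks: "set (concat (replicate n xs)) \<subseteq> set xs"
  by (induction n) auto

lemma Omega_blocks:
  assumes "successively (\<noteq>) u" "u \<noteq> []" "last u = r" "p \<noteq> q" "q \<noteq> r" "r \<noteq> p"
    "set u \<subseteq> {1,2,3}" "{p,q,r} \<subseteq> {1,2,3}" "length u + 3*n = T"
  shows "u @ concat (replicate n [p,q,r]) \<in> Omega T"
  using succ_blocks[OF assms(1-6), of n] assms(7-9) set_blocks[of n "[p,q,r]"]
  by (auto simp: Omega_alt length_concat sum_list_replicate)

definition wc :: "nat \<Rightarrow> nat list" where "wc m = [3,2,1,3,2,1] @ concat (replicate (2*m) [3,2,1])"
definition wa :: "nat \<Rightarrow> nat list" where "wa m = [2,3,2,3,2,1] @ concat (replicate (2*m) [3,2,1])"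
definition wd :: "nat \<Rightarrow> nat list" where "wd m = [2,1,3,1,3,1] @ concat (replicate (2*m) [3,2,1])"
definition wf :: "nat \<Rightarrow> nat list" where "wf m = [2,1,2,3,2,1] @ concat (replicate (2*m) [3,2,1])"
definition we :: "nat \<Rightarrow> nat list" where "we m = [2,1,3,2,1,3] @ concat (replicate (2*m) [2,1,3])"
definition wp :: "nat \<Rightarrow> nat list" where "wp m = [1,2,3,1,2,3] @ concat (replicate (2*m) [1,2,3])"

lemma words_Omega:
  "wc m \<in> Omega (6*Suc m)" "wa m \<in> Omega (6*Suc m)" "wd m \<in> Omega (6*Suc m)"
  "wf m \<in> Omega (6*Suc m)" "we m \<in> Omega (6*Suc m)" "wp m \<in> Omega (6*Suc m)"
  unfolding wc_def wa_def wd_def wf_def we_def wp_def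
  by (rule Omega_blocks; simp)+

lemma avec_words:
  "avec (wc m) = vec_of (\<lambda>i j. real (xcount i j (wc m)))"
  by (simp add: avec_def)

lemma cnt_wc: "avec (wc m) $ 1 = 0" "avec (wc m) $ 2 = 2*m+1" "avec (wc m) $ 3 = 2*m+2" "avec (wc m) $ 4 = 0" "avec (wc m) $ 5 = 0" "avec (wc m) $ 6 = 2*m+2"
  by (simp_all add: avec_def wc_def xcount_blocks del: append_Cons)
lemma cnt_wa: "avec (wa m) $ 1 = 0" "avec (wa m) $ 2 = 2*m" "avec (wa m) $ 3 = 2*m+1" "avec (wa m) $ 4 = 2" "avec (wa m) $ 5 = 0" "avec (wa m) $ 6 = 2*m+2"
  by (simp_all add: avec_def wa_def xcount_blocks del: append_Cons)
lemma cnt_wd: "avec (wd m) $ 1 = 0" "avec (wd m) $ 2 = 2*m+2" "avec (wd m) $ 3 = 2*m+1" "avec (wd m) $ 4 = 0" "avec (wd m) $ 5 = 2" "avec (wd m) $ 6 = 2*m"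
  by (simp_all add: avec_def wd_def xcount_blocks del: append_Cons)
lemma cnt_wf: "avec (wf m) $ 1 = 1" "avec (wf m) $ 2 = 2*m" "avec (wf m) $ 3 = 2*m+2" "avec (wf m) $ 4 = 1" "avec (wf m) $ 5 = 0" "avec (wf m) $ 6 = 2*m+1"
  by (simp_all add: avec_def wf_def xcount_blocks del: append_Cons)
lemma cnt_we: "avec (we m) $ 1 = 0" "avec (we m) $ 2 = 2*m+2" "avec (we m) $ 3 = 2*m+2" "avec (we m) $ 4 = 0" "avec (we m) $ 5 = 0" "avec (we m) $ 6 = 2*m+1"
  by (simp_all add: avec_def we_def xcount_blocks del: append_Cons)
lemma cnt_wp: "avec (wp m) $ 1 = 2*m+2" "avec (wp m) $ 2 = 0" "avec (wp m) $ 3 = 0" "avec (wp m) $ 4 = 2*m+2" "avec (wp m) $ 5 = 2*m+1" "avec (wp m) $ 6 = 0"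
  by (simp_all add: avec_def wp_def xcount_blocks del: append_Cons)

lemma inner_vec_of_l: "vec_of f \<bullet> y = f 1 2 * y$1 + f 1 3 * y$2 + f 2 1 * y$3 + f 2 3 * y$4 + f 3 1 * y$5 + f 3 2 * y$6"
  by (simp add: inner6)

lemma tight_vals:
  "vec_of (cfun (Suc m)) \<bullet> avec (wc m) = 0" "vec_of (cfun (Suc m)) \<bullet> avec (wa m) = 0"
  "vec_of (cfun (Suc m)) \<bullet> avec (wd m) = 0" "vec_of (cfun (Suc m)) \<bullet> avec (wf m) = 0"
  "vec_of (cfun (Suc m)) \<bullet> avec (we m) = 0"
  by (simp_all add: inner_vec_of_l cnt_wc cnt_wa cnt_wd cnt_wf cnt_we cfun_def algebra_simps)

lemma pos_val: "vec_of (cfun (Suc m)) \<bullet> avec (wp m) > 0"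
  apply (simp add: inner_vec_of_l cnt_wp cfun_def algebra_simps)
  by (auto intro!: add_pos_nonneg add_nonneg_nonneg mult_nonneg_nonneg)

lemma affdim_tight: "aff_dim {avec (wc m), avec (wa m), avec (wd m), avec (wf m), avec (we m)} \<ge> 4"
proof -
  define Pc where "Pc = avec (wc m)"
  define Da where "Da = avec (wa m) - Pc"
  define Dd where "Dd = avec (wd m) - Pc"
  define Df where "Df = avec (wf m) - Pc"
  define De where "De = avec (we m) - Pc"
  have ca: "Da$1 = 0" "Da$2 = -1" "Da$3 = -1" "Da$4 = 2" "Da$5 = 0" "Da$6 = 0"
    by (simp_all add: Da_def Pc_def cnt_wa cnt_wc)
  have cd: "Dd$1 = 0" "Dd$2 = 1" "Dd$3 = -1" "Dd$4 = 0" "Dd$5 = 2" "Dd$6 = -2"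
    by (simp_all add: Dd_def Pc_def cnt_wd cnt_wc)
  have cf: "Df$1 = 1" "Df$2 = -1" "Df$3 = 0" "Df$4 = 1" "Df$5 = 0" "Df$6 = -1"
    by (simp_all add: Df_def Pc_def cnt_wf cnt_wc)
  have ce: "De$1 = 0" "De$2 = 1" "De$3 = 0" "De$4 = 0" "De$5 = 0" "De$6 = -1"
    by (simp_all add: De_def Pc_def cnt_we cnt_wc)
  have s1: "De \<notin> span {}" using ce by (auto simp: vec6_eq_iff)
  have s2: "Df \<notin> span {De}" using ce cf by (auto simp: span_breakdown_eq vec6_eq_iff)
  have s3: "Dd \<notin> span {Df, De}" using ce cf cd by (auto simp: span_breakdown_eq vec6_eq_iff)
  have s4: "Da \<notin> span {Dd, Df, De}" using ce cf cd ca by (auto simp: span_breakdown_eq vec6_eq_iff)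
  have d4: "dim {Da, Dd, Df, De} = 4" using s1 s2 s3 s4 by (simp add: dim_insert)
  let ?S = "{avec (wc m), avec (wa m), avec (wd m), avec (wf m), avec (we m)}"
  have "aff_dim ?S = int (dim ((+) (- Pc) ` ?S))"
    by (rule aff_dim_eq_dim) (simp add: hull_inc Pc_def)
  moreover have "(+) (- Pc) ` ?S = {0, Da, Dd, Df, De}"
    by (simp add: Pc_def Da_def Dd_def Df_def De_def)
  moreover have "dim {Da, Dd, Df, De} \<le> dim {0, Da, Dd, Df, De}" by (rule dim_subset) auto
  ultimately show ?thesis using d4 by simp
qed

lemma sum_counts:
  assumes "w \<in> Omega T" "T \<ge> 1"
  shows "vec_of (\<lambda>i j. 1) \<bullet> avec w = real T - 1"
proof -
  have len: "length w = T" and set: "set w \<subseteq> {1,2,3}" and suc: "successively (\<noteq>) w"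
    using assms by (auto simp: Omega_alt)
  have ne: "w \<noteq> []" using len assms by auto
  have "int (xcount 1 2 w) + xcount 1 3 w + xcount 2 1 w + xcount 2 3 w + xcount 3 1 w + xcount 3 2 w = int T - 1"
    using flow[OF set suc ne] len by simp
  then have "real_of_int (int (xcount 1 2 w) + xcount 1 3 w + xcount 2 1 w + xcount 2 3 w + xcount 3 1 w + xcount 3 2 w) = real_of_int (int T - 1)"
    by simp
  then show ?thesis unfolding avec_def inner_vec_of by simp
qed

lemma affdim_PT:
  assumes "T \<ge> 1"
  shows "aff_dim (PT T) \<le> 5"
proof -
  have ne: "vec_of (\<lambda>i j. 1) \<noteq> (0::real^6)" by (simp add: vec6_eq_iff)
  have "PT T \<subseteq> {x. vec_of (\<lambda>i j. 1) \<bullet> x = real T - 1}"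
    unfolding PT_def
    by (rule hull_minimal) (auto simp: sum_counts[OF _ assms] convex_hyperplane)
  then have "aff_dim (PT T) \<le> aff_dim {x. vec_of (\<lambda>i j. 1) \<bullet> x = real T - 1}"
    by (rule aff_dim_subset)
  also have "\<dots> = 5" using ne by simp
  finally show ?thesis .
qed

theorem proposition12:
  fixes k :: nat and \<sigma> :: "nat \<Rightarrow> nat"
  assumes "k \<ge> 1" and "\<sigma> permutes {1,2,3}"
  shows "defines_facet (sigma_act \<sigma> (cfun k)) (6 * k)"
proof -
  obtain m where km: "k = Suc m" using assms(1) by (cases k) auto
  define c' where "c' = sigma_act \<sigma> (cfun k)"
  define F where "F = {x \<in> PT (6*k). c' \<bullet> x = 0}"
  have sig: "\<sigma> permutes {1,2,3::nat}" using assms(2) .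
  have isig: "inv \<sigma> permutes {1,2,3::nat}" using permutes_inv[OF sig] .
  have nn: "\<forall>w \<in> Omega (6*k). c' \<bullet> avec w \<ge> 0"
    unfolding c'_def using sigma_inner[OF sig] nonneg_id[OF assms(1) map_perm_Omega[OF sig]] by simp
  have conv: "convex (PT (6*k))" unfolding PT_def by simp
  have PTsub: "PT (6*k) \<subseteq> {x. c' \<bullet> x \<ge> 0}"
    unfolding PT_def by (rule hull_minimal) (use nn in \<open>auto simp: convex_halfspace_ge\<close>)
  have face: "F face_of PT (6*k)"
  proof -
    have "(PT (6*k) \<inter> {x. c' \<bullet> x = 0}) face_of PT (6*k)"
      by (rule face_of_Int_supporting_hyperplane_ge[OF conv]) (use PTsub in auto)
    moreover have "PT (6*k) \<inter> {x. c' \<bullet> x = 0} = F" unfolding F_def by auto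
    ultimately show ?thesis by simp
  qed
  have bk: "map \<sigma> (map (inv \<sigma>) w) = w" for w
    by (simp add: comp_def permutes_inverses(1)[OF sig])
  have inPT: "avec (map (inv \<sigma>) w) \<in> PT (6*k)" if "w \<in> Omega (6*k)" for w
    unfolding PT_def by (rule hull_inc) (use map_perm_Omega[OF isig that] in auto)
  have val: "c' \<bullet> avec (map (inv \<sigma>) w) = vec_of (cfun k) \<bullet> avec w" for w
    unfolding c'_def sigma_inner[OF sig] bk ..
  let ?S = "{avec (wc m), avec (wa m), avec (wd m), avec (wf m), avec (we m)}"
  have SF: "Mp \<sigma> ` ?S \<subseteq> F"
    using words_Omega[of m] tight_vals[of m] inPT val
    by (auto simp: F_def Mp_avec[OF sig] km)
  have "aff_dim (Mp \<sigma> ` ?S) = aff_dim ?S"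
    by (rule aff_dim_injective_linear_image[OF linear_Mp inj_Mp[OF sig]])
  then have F4: "aff_dim F \<ge> 4" using affdim_tight[of m] aff_dim_subset[OF SF] by linarith
  have Fne: "F \<noteq> {}" using SF by auto
  have "avec (map (inv \<sigma>) (wp m)) \<notin> F" "avec (map (inv \<sigma>) (wp m)) \<in> PT (6*k)"
    using words_Omega(6)[of m] pos_val[of m] inPT val by (auto simp: F_def km)
  then have "F \<noteq> PT (6*k)" by blast
  then have "aff_dim F < aff_dim (PT (6*k))" by (rule face_of_aff_dim_lt[OF conv face])
  moreover have "aff_dim (PT (6*k)) \<le> 5" by (rule affdim_PT) (use assms(1) in simp)
  ultimately have "aff_dim F = aff_dim (PT (6*k)) - 1" using F4 by linarith
  then have "F facet_of PT (6*k)" using face Fne by (simp add: facet_of_def)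
  then show ?thesis using nn unfolding defines_facet_def F_def c'_def by simp
qed


end
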